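(* Let $\mathcal{R} = \mathcal{R}_{\rm BL} \cup \mathcal{R}_{\rm HS}$ be the union of the family of all bottomless rectangles and the family of all horizontal strips. Then $m_{\mathcal{R}}(2) = \infty$; that is, for every $m \geq 1$ there is a finite point set $V \subset \mathbb{R}^2$ such that $\mathcal{H}(V,\mathcal{R},m)$ admits no polychromatic $2$-coloring (equivalently, for every $2$-coloring of $V$ some hyperedge of $\mathcal{H}(V,\mathcal{R},m)$ is monochromatic).
   Context: For a finite set $V \subset \mathbb{R}^2$ and a family $\mathcal{R}$ of subsets of $\mathbb{R}^2$ (called ranges), $\mathcal{H}(V,\mathcal{R})$ is the hypergraph on vertex set $V$ whose hyperedges are the sets $V \cap R$ for $R \in \mathcal{R}$, and $\mathcal{H}(V,\mathcal{R},m)$ is its subhypergraph consisting of the hyperedges of size exactly $m$. A coloring $c\colon V \to [k]$ is polychromatic for a hypergraph if every hyperedge contains a vertex of each of the $k$ colors. Point sets are assumed to be in general position: pairwise distinct $x$-coordinates, pairwise distinct $y$-coordinates, and pairwise distinct values of $x+y$. For a range family $\mathcal{R}$ and $k \geq 1$, $m_{\mathcal{R}}(k)$ is the smallest $m$ such that for every finite $V \subset \mathbb{R}^2$ in general position the hypergraph $\mathcal{H}(V,\mathcal{R},m)$ admits a polychromatic $k$-coloring, and $m_{\mathcal{R}}(k)=\infty$ if no such $m$ exists. Bottomless rectangles: $\mathcal{R}_{\rm BL} = \{\{(x,y) : a_1 \leq x \leq a_2,\ y \leq b\} : a_1,a_2,b \in \mathbb{R}\}$. Horizontal strips: $\mathcal{R}_{\rm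 HS} = \{\{(x,y) : b_1 \leq y \leq b_2\} : b_1,b_2 \in \mathbb{R}\}$. *)

theory Defs
  imports "HOL-Analysis.Analysis"
begin

type_synonym point = "real \<times> real"

definition general_position :: "point set \<Rightarrow> bool" where
  "general_position V \<longleftrightarrow>
     (\<forall>p\<in>V. \<forall>q\<in>V. p \<noteq> q \<longrightarrow>
        fst p \<noteq> fst q \<and> snd p \<noteq> snd q \<and> fst p + snd p \<noteq> fst q + snd q)"

definition R_BL :: "point set set" where
  "R_BL = {{(x, y). a1 \<le> x \<and> x \<le> a2 \<and> y \<le> b} | a1 a2 b. True}"

definition R_HS :: "point set set" where
  "R_HS = {{(x, y). b1 \<le> y \<and> y \<le> b2} | b1 b2. True}"

definition hyperedges :: "point set \<Rightarrow> point set set \<Rightarrow> point set set" where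
  "hyperedges V \<R> = {V \<inter> R | R. R \<in> \<R>}"

definition hyperedges_m :: "point set \<Rightarrow> point set set \<Rightarrow> nat \<Rightarrow> point set set" where
  "hyperedges_m V \<R> m = {e \<in> hyperedges V \<R>. card e = m}"

definition polychromatic :: "point set \<Rightarrow> point set set \<Rightarrow> nat \<Rightarrow> (point \<Rightarrow> nat) \<Rightarrow> bool" where
  "polychromatic V E k c \<longleftrightarrow>
     (\<forall>v\<in>V. c v \<in> {1..k}) \<and> (\<forall>e\<in>E. \<forall>i\<in>{1..k}. \<exists>v\<in>e. c v = i)"

definition m_R_infinite :: "point set set \<Rightarrow> nat \<Rightarrow> bool" where
  "m_R_infinite \<R> k \<longleftrightarrow>
     (\<forall>m::nat. \<not> (\<forall>V. finite V \<and> general_position V \<longrightarrow>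
        (\<exists>c. polychromatic V (hyperedges_m V \<R> m) k c)))"

end

theory Submission
  imports Defs
begin

datatype rport = RPort (ra: real) (rl: real) (rm: real) (rr: real)
datatype bport = BPort (bs: real) (bt: real)

definition redset :: "(real \<times> real) set \<Rightarrow> rport \<Rightarrow> real \<Rightarrow> (real \<times> real) set" where
  "redset P q r = {p\<in>P. ra q < fst p \<and> fst p \<le> r \<and> snd p < rl q}"
definition blueset :: "(real \<times> real) set \<Rightarrow> bport \<Rightarrow> (real \<times> real) set" where
  "blueset P b = {p\<in>P. bs b \<le> snd p \<and> snd p \<le> bt b}"

definition game :: "nat \<Rightarrow> nat \<Rightarrow> (real \<times> real) set \<Rightarrow> rport set \<Rightarrow> bport set \<Rightarrow> bool" where
  "game k l P RP BP \<longleftrightarrow> (\<forall>col::real \<times> real \<Rightarrow> bool.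
     (\<exists>q\<in>RP. \<exists>r. ra q < r \<and> r \<le> rr q \<and> card (redset P q r) = k \<and> (\<forall>p\<in>redset P q r. col p)) \<or>
     (\<exists>b\<in>BP. card (blueset P b) = l \<and> (\<forall>p\<in>blueset P b. \<not> col p)))"

definition good :: "nat \<Rightarrow> nat \<Rightarrow> real \<Rightarrow> real \<Rightarrow> real \<Rightarrow> real \<Rightarrow> (real \<times> real) set \<Rightarrow> rport set \<Rightarrow> bport set \<Rightarrow> bool" where
  "good k l x0 x1 y0 y1 P RP BP \<longleftrightarrow>
     finite P \<and> finite RP \<and> finite BP \<and> inj_on fst P \<and> inj_on snd P \<and>
     (\<forall>p\<in>P. x0 < fst p \<and> fst p < x1 \<and> y0 < snd p \<and> snd p < y1) \<and>
     (\<forall>q\<in>RP. x0 < ra q \<and> ra q < rr q \<and> rr q < x1 \<and> y0 < rl q \<and> rl q < rm q \<and> rm q < y1) \<and>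
     (\<forall>q\<in>RP. \<forall>p\<in>P. ra q < fst p \<and> fst p \<le> rr q \<longrightarrow> snd p < rl q \<or> rm q < snd p) \<and>
     (\<forall>b\<in>BP. y0 < bs b \<and> bs b \<le> bt b \<and> bt b < y1) \<and>
     (\<forall>q\<in>RP. \<forall>q'\<in>RP. ra q < ra q' \<and> ra q' < rr q \<longrightarrow> rm q \<le> rl q') \<and>
     (\<forall>q\<in>RP. \<forall>q'\<in>RP. q \<noteq> q' \<longrightarrow> ra q \<noteq> ra q' \<and> (rm q \<le> rl q' \<or> rm q' \<le> rl q)) \<and>
     (\<forall>b\<in>BP. \<forall>b'\<in>BP. b \<noteq> b' \<longrightarrow> bt b' < bs b \<or> bt b < bt b') \<and>
     (\<forall>q\<in>RP. \<forall>b\<in>BP. rm q \<le> bs b \<or> bt b < rl q) \<and>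
     game k l P RP BP"

definition mingap :: "real set \<Rightarrow> real" where
  "mingap S = (if {d. \<exists>c\<in>S. \<exists>c'\<in>S. c < c' \<and> d = c' - c} = {} then 1
               else Min {d. \<exists>c\<in>S. \<exists>c'\<in>S. c < c' \<and> d = c' - c})"

lemma mingap_fin: assumes "finite S" shows "finite {d. \<exists>c\<in>S. \<exists>c'\<in>S. c < c' \<and> d = c' - c}"
proof -
  have "{d. \<exists>c\<in>S. \<exists>c'\<in>S. c < c' \<and> d = c' - c} \<subseteq> (\<lambda>(c,c'). c' - c) ` (S \<times> S)" by force
  thus ?thesis using assms finite_subset by blast
qed

lemma mingap_pos: assumes "finite S" shows "0 < mingap S"
proof (cases "{d. \<exists>c\<in>S. \<exists>c'\<in>S. c < c' \<and> d = c' - c} = {}")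
  case True then show ?thesis unfolding mingap_def by simp
next
  case False
  have "Min {d. \<exists>c\<in>S. \<exists>c'\<in>S. c < c' \<and> d = c' - c} \<in> {d. \<exists>c\<in>S. \<exists>c'\<in>S. c < c' \<and> d = c' - c}"
    using Min_in[OF mingap_fin[OF assms] False] .
  then show ?thesis using False unfolding mingap_def by auto
qed

lemma mingap_le: assumes "finite S" "c \<in> S" "c' \<in> S" "c < c'" shows "c + mingap S \<le> c'"
proof -
  have m: "c' - c \<in> {d. \<exists>c\<in>S. \<exists>c'\<in>S. c < c' \<and> d = c' - c}" using assms by blast
  hence "Min {d. \<exists>c\<in>S. \<exists>c'\<in>S. c < c' \<and> d = c' - c} \<le> c' - c"
    using Min_le[OF mingap_fin[OF assms(1)]] by blast
  thus ?thesis using m unfolding mingap_def by (auto split: if_splits)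
qed

lemma good_red_base:
  assumes "x0 < x1" "y0 < y1"
  shows "good 0 l x0 x1 y0 y1 {} {RPort (x0 + (x1-x0)/3) (y0 + (y1-y0)/3) (y0 + 2*(y1-y0)/3) (x0 + 2*(x1-x0)/3)} {}"
  using assms unfolding good_def game_def redset_def
  by (auto intro!: exI[of _ "x0 + 2*(x1-x0)/3"] simp: field_simps)

lemma good_blue_base:
  assumes "y0 < y1"
  shows "good k 0 x0 x1 y0 y1 {} {} {BPort ((y0+y1)/2) ((y0+y1)/2)}"
  using assms unfolding good_def game_def blueset_def by simp

locale stepX =
  fixes k l :: nat and x0 x1 y0 y1 :: real
    and PX :: "(real \<times> real) set" and RX :: "rport set" and BX :: "bport set"
  assumes x01: "x0 < x1" and y01: "y0 < y1"
    and X: "good k (Suc l) x0 ((x0+x1)/2) y0 y1 PX RX BX"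
begin

definition xm where "xm = (x0+x1)/2"
definition CYX where "CYX = snd ` PX \<union> rl ` RX \<union> rm ` RX"
definition dX where "dX = mingap CYX"
definition CXX where "CXX = fst ` PX \<union> ra ` RX \<union> rr ` RX \<union> {xm}"
definition eta where "eta = mingap CXX / 2"
definition lo where "lo q = rl q + dX/3"
definition hi where "hi q = rl q + 2*dX/3"
definition sx where "sx q = xm + ra q - x0"

lemma xm: "x0 < xm" "xm < x1" "xm - x0 = x1 - xm" using x01 unfolding xm_def by (auto simp: field_simps)

lemma finPX: "finite PX" and finRX: "finite RX" and finBX: "finite BX"
  and injfX: "inj_on fst PX" and injsX: "inj_on snd PX"
  using X unfolding good_def by auto

lemma PXbox: "p \<in> PX \<Longrightarrow> x0 < fst p \<and> fst p < xm \<and> y0 < snd p \<and> snd p < y1"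
  using X unfolding good_def xm_def by auto

lemma RXbox: "q \<in> RX \<Longrightarrow> x0 < ra q \<and> ra q < rr q \<and> rr q < xm \<and> y0 < rl q \<and> rl q < rm q \<and> rm q < y1"
  using X unfolding good_def xm_def by auto

lemma R1X: "q \<in> RX \<Longrightarrow> p \<in> PX \<Longrightarrow> ra q < fst p \<Longrightarrow> fst p \<le> rr q \<Longrightarrow> snd p < rl q \<or> rm q < snd p"
  using X unfolding good_def by auto

lemma BXbox: "b \<in> BX \<Longrightarrow> y0 < bs b \<and> bs b \<le> bt b \<and> bt b < y1"
  using X unfolding good_def by auto

lemma NX: "q \<in> RX \<Longrightarrow> q' \<in> RX \<Longrightarrow> ra q < ra q' \<Longrightarrow> ra q' < rr q \<Longrightarrow> rm q \<le> rl q'"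
  using X unfolding good_def by auto

lemma DX: "q \<in> RX \<Longrightarrow> q' \<in> RX \<Longrightarrow> q \<noteq> q' \<Longrightarrow> ra q \<noteq> ra q' \<and> (rm q \<le> rl q' \<or> rm q' \<le> rl q)"
  using X unfolding good_def by auto

lemma BNX: "b \<in> BX \<Longrightarrow> b' \<in> BX \<Longrightarrow> b \<noteq> b' \<Longrightarrow> bt b' < bs b \<or> bt b < bt b'"
  using X unfolding good_def by auto

lemma B1X: "q \<in> RX \<Longrightarrow> b \<in> BX \<Longrightarrow> rm q \<le> bs b \<or> bt b < rl q"
  using X unfolding good_def by auto

lemma gameX: "game k (Suc l) PX RX BX"
  using X unfolding good_def by auto

lemma finCYX: "finite CYX" unfolding CYX_def using finPX finRX by auto
lemma finCXX: "finite CXX" unfolding CXX_def using finPX finRX by auto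

lemma dX_pos: "0 < dX" unfolding dX_def using mingap_pos[OF finCYX] .
lemma eta_pos: "0 < eta" unfolding eta_def using mingap_pos[OF finCXX] by simp

lemma gapYX: "c \<in> CYX \<Longrightarrow> c' \<in> CYX \<Longrightarrow> c < c' \<Longrightarrow> c + dX \<le> c'"
  unfolding dX_def using mingap_le[OF finCYX] by blast
lemma gapXX: "c \<in> CXX \<Longrightarrow> c' \<in> CXX \<Longrightarrow> c < c' \<Longrightarrow> c + 2*eta \<le> c'"
  unfolding eta_def using mingap_le[OF finCXX] by fastforce

lemma lohi: assumes "q \<in> RX"
  shows "rl q < lo q" "lo q < hi q" "hi q < rm q" "y0 < lo q" "hi q < y1"
proof -
  have "rl q + dX \<le> rm q" using gapYX[of "rl q" "rm q"] RXbox[OF assms] assms unfolding CYX_def by auto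
  thus "rl q < lo q" "lo q < hi q" "hi q < rm q" "y0 < lo q" "hi q < y1"
    using dX_pos RXbox[OF assms] unfolding lo_def hi_def by auto
qed

lemma PX_out: assumes "p \<in> PX" "q \<in> RX" shows "snd p < lo q \<or> hi q < snd p"
proof (cases "snd p \<le> rl q")
  case True thus ?thesis using lohi[OF assms(2)] by auto
next
  case False
  hence "rl q + dX \<le> snd p" using gapYX[of "rl q" "snd p"] assms unfolding CYX_def by auto
  thus ?thesis using dX_pos unfolding hi_def by auto
qed

lemma I_disj: assumes "q \<in> RX" "q' \<in> RX" "q \<noteq> q'" shows "hi q < lo q' \<or> hi q' < lo q"
  using DX[OF assms] lohi[OF assms(1)] lohi[OF assms(2)] by auto

lemma ra_xm: "q \<in> RX \<Longrightarrow> ra q + 2*eta \<le> xm"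
  using gapXX[of "ra q" xm] RXbox[of q] unfolding CXX_def by auto
lemma ra_rr: "q \<in> RX \<Longrightarrow> ra q + 2*eta \<le> rr q"
  using gapXX[of "ra q" "rr q"] RXbox[of q] unfolding CXX_def by auto
lemma ra_PX: "q \<in> RX \<Longrightarrow> p \<in> PX \<Longrightarrow> ra q < fst p \<Longrightarrow> ra q + 2*eta \<le> fst p"
  using gapXX[of "ra q" "fst p"] unfolding CXX_def by auto
lemma ra_ra: "q \<in> RX \<Longrightarrow> q' \<in> RX \<Longrightarrow> ra q < ra q' \<Longrightarrow> ra q + 2*eta \<le> ra q'"
  using gapXX[of "ra q" "ra q'"] unfolding CXX_def by auto

lemma sx_box: assumes "q \<in> RX" shows "xm < sx q" "sx q + eta < x1"
  using RXbox[OF assms] ra_xm[OF assms] xm eta_pos unfolding sx_def by auto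

lemma sx_disj: assumes "q \<in> RX" "q' \<in> RX" "q \<noteq> q'" shows "sx q + eta < sx q' \<or> sx q' + eta < sx q"
proof -
  have "ra q \<noteq> ra q'" using DX[OF assms] by auto
  hence "ra q < ra q' \<or> ra q' < ra q" by auto
  thus ?thesis using ra_ra[OF assms(1,2)] ra_ra[OF assms(2,1)] eta_pos unfolding sx_def by auto
qed

end

locale stepY = stepX +
  fixes PYf :: "rport \<Rightarrow> (real \<times> real) set" and RYf :: "rport \<Rightarrow> rport set" and BYf :: "rport \<Rightarrow> bport set"
  assumes Y: "q \<in> RX \<Longrightarrow> good (Suc k) l (sx q) (sx q + eta) (lo q) (hi q) (PYf q) (RYf q) (BYf q)"
begin

definition CY where "CY q = snd ` PYf q \<union> bs ` BYf q \<union> bt ` BYf q \<union> rl ` RYf q \<union> rm ` RYf q \<union> {hi q}"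
definition eps where "eps q = mingap (CY q) / 2"
definition phi where "phi q y = (y - lo q) / (hi q - lo q)"
definition uu where "uu q b = (ra q + eta * phi q (bt b + eps q), bt b + eps q)"
definition SG where "SG = (SIGMA q:RX. BYf q)"
definition U where "U = (\<lambda>(q,b). uu q b) ` SG"
definition PY where "PY = (\<Union>q\<in>RX. PYf q)"
definition PP where "PP = PX \<union> PY \<union> U"
definition nb where "nb q b = BPort (bs b) (bt b + eps q)"
definition BB where "BB = BX \<union> (\<lambda>(q,b). nb q b) ` SG"
definition CP where "CP = snd ` PP \<union> bs ` BB \<union> bt ` BB \<union> (\<Union>q\<in>RX. rl ` RYf q \<union> rm ` RYf q) \<union> {y1}"
definition dP where "dP = mingap CP"
definition nu where "nu q b = RPort (ra q + eta * phi q (bt b)) (bt b + eps q + dP/3) (bt b + eps q + 2*dP/3) (rr q)"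
definition RY where "RY = (\<Union>q\<in>RX. RYf q)"
definition RR where "RR = (\<lambda>(q,b). nu q b) ` SG \<union> RY"

context fixes q assumes q: "q \<in> RX"
begin
lemma finPY: "finite (PYf q)" and finRY: "finite (RYf q)" and finBY: "finite (BYf q)"
  and injfY: "inj_on fst (PYf q)" and injsY: "inj_on snd (PYf q)"
  using Y[OF q] unfolding good_def by auto
lemma PYbox: "p \<in> PYf q \<Longrightarrow> sx q < fst p \<and> fst p < sx q + eta \<and> lo q < snd p \<and> snd p < hi q"
  using Y[OF q] unfolding good_def by auto
lemma RYbox: "r \<in> RYf q \<Longrightarrow> sx q < ra r \<and> ra r < rr r \<and> rr r < sx q + eta \<and> lo q < rl r \<and> rl r < rm r \<and> rm r < hi q"
  using Y[OF q] unfolding good_def by auto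
lemma R1Y: "r \<in> RYf q \<Longrightarrow> p \<in> PYf q \<Longrightarrow> ra r < fst p \<Longrightarrow> fst p \<le> rr r \<Longrightarrow> snd p < rl r \<or> rm r < snd p"
  using Y[OF q] unfolding good_def by auto
lemma BYbox: "b \<in> BYf q \<Longrightarrow> lo q < bs b \<and> bs b \<le> bt b \<and> bt b < hi q"
  using Y[OF q] unfolding good_def by auto
lemma NY: "r \<in> RYf q \<Longrightarrow> r' \<in> RYf q \<Longrightarrow> ra r < ra r' \<Longrightarrow> ra r' < rr r \<Longrightarrow> rm r \<le> rl r'"
  using Y[OF q] unfolding good_def by auto
lemma DY: "r \<in> RYf q \<Longrightarrow> r' \<in> RYf q \<Longrightarrow> r \<noteq> r' \<Longrightarrow> ra r \<noteq> ra r' \<and> (rm r \<le> rl r' \<or> rm r' \<le> rl r)"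
  using Y[OF q] unfolding good_def by auto
lemma BNY: "b \<in> BYf q \<Longrightarrow> b' \<in> BYf q \<Longrightarrow> b \<noteq> b' \<Longrightarrow> bt b' < bs b \<or> bt b < bt b'"
  using Y[OF q] unfolding good_def by auto
lemma B1Y: "r \<in> RYf q \<Longrightarrow> b \<in> BYf q \<Longrightarrow> rm r \<le> bs b \<or> bt b < rl r"
  using Y[OF q] unfolding good_def by auto
lemma gameY: "game (Suc k) l (PYf q) (RYf q) (BYf q)"
  using Y[OF q] unfolding good_def by auto

lemma finCY: "finite (CY q)" unfolding CY_def using finPY finRY finBY by auto
lemma eps_pos: "0 < eps q" unfolding eps_def using mingap_pos[OF finCY] by simp
lemma gapCY: "c \<in> CY q \<Longrightarrow> c' \<in> CY q \<Longrightarrow> c < c' \<Longrightarrow> c + 2 * eps q \<le> c'"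
  unfolding eps_def using mingap_le[OF finCY] by fastforce

lemma bt_eps: "b \<in> BYf q \<Longrightarrow> bt b + 2 * eps q \<le> hi q"
  using gapCY[of "bt b" "hi q"] BYbox[of b] unfolding CY_def by auto

lemma bt_inj: "b \<in> BYf q \<Longrightarrow> b' \<in> BYf q \<Longrightarrow> bt b = bt b' \<Longrightarrow> b = b'"
  using BNY[of b b'] BYbox[of b] BYbox[of b'] by force

lemma phi_mono: "phi q y < phi q y' \<longleftrightarrow> y < y'"
  using lohi[OF q] unfolding phi_def by (auto simp: divide_less_cancel)

lemma phi_01: "lo q < y \<Longrightarrow> y < hi q \<Longrightarrow> 0 < phi q y \<and> phi q y < 1"
  using lohi[OF q] unfolding phi_def by (auto simp: field_simps)

lemma uu_facts: assumes "b \<in> BYf q"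
  shows "ra q < fst (uu q b)" "fst (uu q b) < ra q + eta" "snd (uu q b) = bt b + eps q"
    "lo q < snd (uu q b)" "snd (uu q b) < hi q"
proof -
  have "lo q < bt b + eps q" "bt b + eps q < hi q"
    using BYbox[OF assms] bt_eps[OF assms] eps_pos by auto
  note p = phi_01[OF this]
  have "0 < eta * phi q (bt b + eps q)" "eta * phi q (bt b + eps q) < eta"
    using p eta_pos by (auto simp: mult_pos_pos)
  then show "ra q < fst (uu q b)" "fst (uu q b) < ra q + eta" "snd (uu q b) = bt b + eps q"
    "lo q < snd (uu q b)" "snd (uu q b) < hi q"
    unfolding uu_def using \<open>lo q < bt b + eps q\<close> \<open>bt b + eps q < hi q\<close> by auto
qed

lemma nu_facts: assumes "b \<in> BYf q"
  shows "ra q < ra (nu q b)" "ra (nu q b) < fst (uu q b)" "rl (nu q b) = snd (uu q b) + dP/3"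
    "rm (nu q b) = snd (uu q b) + 2*dP/3" "rr (nu q b) = rr q"
proof -
  have "lo q < bt b" "bt b < hi q" using BYbox[OF assms] by auto
  note p = phi_01[OF this]
  have "phi q (bt b) < phi q (bt b + eps q)" using phi_mono eps_pos by auto
  hence "eta * phi q (bt b) < eta * phi q (bt b + eps q)" using eta_pos by auto
  moreover have "0 < eta * phi q (bt b)" using p eta_pos by auto
  ultimately show "ra q < ra (nu q b)" "ra (nu q b) < fst (uu q b)" "rl (nu q b) = snd (uu q b) + dP/3"
    "rm (nu q b) = snd (uu q b) + 2*dP/3" "rr (nu q b) = rr q"
    unfolding nu_def uu_def by auto
qed

end

lemma uu_vs_PY: "q \<in> RX \<Longrightarrow> b \<in> BYf q \<Longrightarrow> p \<in> PYf q \<Longrightarrow> snd p \<le> bt b \<or> bt b + 2 * eps q \<le> snd p"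
  using gapCY[of q "bt b" "snd p"] unfolding CY_def by force

lemma bt_vs: "q \<in> RX \<Longrightarrow> b \<in> BYf q \<Longrightarrow> b' \<in> BYf q \<Longrightarrow> b \<noteq> b' \<Longrightarrow>
   bt b + 2 * eps q \<le> bt b' \<or> bt b' + 2 * eps q \<le> bt b"
proof -
  assume a: "q \<in> RX" "b \<in> BYf q" "b' \<in> BYf q" "b \<noteq> b'"
  have "bt b \<noteq> bt b'" using bt_inj[OF a(1-3)] a(4) by auto
  hence "bt b < bt b' \<or> bt b' < bt b" by auto
  thus ?thesis using gapCY[OF a(1), of "bt b" "bt b'"] gapCY[OF a(1), of "bt b'" "bt b"] a
    unfolding CY_def by auto
qed

lemma bt_bs: "q \<in> RX \<Longrightarrow> b \<in> BYf q \<Longrightarrow> b' \<in> BYf q \<Longrightarrow> bt b' < bs b \<Longrightarrow> bt b' + 2 * eps q \<le> bs b"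
  using gapCY[of q "bt b'" "bs b"] unfolding CY_def by force

lemma bt_rl: "q \<in> RX \<Longrightarrow> b \<in> BYf q \<Longrightarrow> r \<in> RYf q \<Longrightarrow> bt b < rl r \<Longrightarrow> bt b + 2 * eps q \<le> rl r"
  using gapCY[of q "bt b" "rl r"] unfolding CY_def by force

lemma finSG: "finite SG" unfolding SG_def using finRX finBY by auto
lemma finU: "finite U" unfolding U_def using finSG by auto
lemma finPYall: "finite PY" unfolding PY_def using finRX finPY by auto
lemma finPP: "finite PP" unfolding PP_def using finPX finPYall finU by auto
lemma finBB: "finite BB" unfolding BB_def using finBX finSG by auto
lemma finRYall: "finite RY" unfolding RY_def using finRX finRY by auto
lemma finRR: "finite RR" unfolding RR_def using finSG finRYall by auto
lemma finCP: "finite CP" unfolding CP_def using finPP finBB finRX finRY by auto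
lemma dP_pos: "0 < dP" unfolding dP_def using mingap_pos[OF finCP] .
lemma gapP: "c \<in> CP \<Longrightarrow> c' \<in> CP \<Longrightarrow> c < c' \<Longrightarrow> c + dP \<le> c'"
  unfolding dP_def using mingap_le[OF finCP] by blast

lemma PP_cases:
  assumes "p \<in> PP"
  obtains "p \<in> PX" | q where "q \<in> RX" "p \<in> PYf q" | q b where "q \<in> RX" "b \<in> BYf q" "p = uu q b"
  using assms unfolding PP_def PY_def U_def SG_def by auto

lemma RR_cases:
  assumes "r \<in> RR"
  obtains q b where "q \<in> RX" "b \<in> BYf q" "r = nu q b" | q where "q \<in> RX" "r \<in> RYf q"
  using assms unfolding RR_def RY_def SG_def by auto

lemma BB_cases:
  assumes "b \<in> BB"
  obtains "b \<in> BX" | q g where "q \<in> RX" "g \<in> BYf q" "b = nb q g"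
  using assms unfolding BB_def SG_def by auto

lemma uu_PP: "q \<in> RX \<Longrightarrow> b \<in> BYf q \<Longrightarrow> uu q b \<in> PP"
  unfolding PP_def U_def SG_def by force
lemma PY_PP: "q \<in> RX \<Longrightarrow> p \<in> PYf q \<Longrightarrow> p \<in> PP"
  unfolding PP_def PY_def by force
lemma PX_PP: "p \<in> PX \<Longrightarrow> p \<in> PP"
  unfolding PP_def by force
lemma nb_BB: "q \<in> RX \<Longrightarrow> g \<in> BYf q \<Longrightarrow> nb q g \<in> BB"
  unfolding BB_def SG_def by force
lemma nu_RR: "q \<in> RX \<Longrightarrow> b \<in> BYf q \<Longrightarrow> nu q b \<in> RR"
  unfolding RR_def SG_def by force
lemma RY_RR: "q \<in> RX \<Longrightarrow> r \<in> RYf q \<Longrightarrow> r \<in> RR"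
  unfolding RR_def RY_def by force
lemma nb_simps[simp]: "bs (nb q g) = bs g" "bt (nb q g) = bt g + eps q"
  unfolding nb_def by auto

lemma CP_snd: "p \<in> PP \<Longrightarrow> snd p \<in> CP" unfolding CP_def by auto
lemma CP_bs: "b \<in> BB \<Longrightarrow> bs b \<in> CP" unfolding CP_def by auto
lemma CP_bt: "b \<in> BB \<Longrightarrow> bt b \<in> CP" unfolding CP_def by auto
lemma CP_rl: "q \<in> RX \<Longrightarrow> r \<in> RYf q \<Longrightarrow> rl r \<in> CP" unfolding CP_def by auto
lemma CP_rm: "q \<in> RX \<Longrightarrow> r \<in> RYf q \<Longrightarrow> rm r \<in> CP" unfolding CP_def by auto
lemma CP_y1: "y1 \<in> CP" unfolding CP_def by auto

lemma slot: assumes "q \<in> RX" "p \<in> PP" "sx q < fst p" "fst p < sx q + eta" shows "p \<in> PYf q"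
  using assms(2)
proof (cases rule: PP_cases)
  case 1 thus ?thesis using PXbox[of p] sx_box[OF assms(1)] assms by auto
next
  case (2 q')
  show ?thesis
  proof (cases "q' = q")
    case True thus ?thesis using 2 by simp
  next
    case False thus ?thesis using sx_disj[OF 2(1) assms(1) False] PYbox[OF 2] assms by auto
  qed
next
  case (3 q' b)
  thus ?thesis using uu_facts[OF 3(1,2)] ra_xm[OF 3(1)] sx_box[OF assms(1)] assms eta_pos by auto
qed


lemma uu_fst_eq: assumes "q \<in> RX" "b \<in> BYf q" "b' \<in> BYf q" "fst (uu q b) = fst (uu q b')" shows "b = b'"
proof -
  have "eta * phi q (bt b + eps q) = eta * phi q (bt b' + eps q)" using assms(4) unfolding uu_def by simp
  hence "phi q (bt b + eps q) = phi q (bt b' + eps q)" using eta_pos by simp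
  hence "bt b = bt b'" using phi_mono[OF assms(1), of "bt b + eps q" "bt b' + eps q"]
      phi_mono[OF assms(1), of "bt b' + eps q" "bt b + eps q"] by auto
  thus ?thesis using bt_inj[OF assms(1-3)] by simp
qed

lemma fst_inj: assumes p: "p \<in> PP" and p': "p' \<in> PP" and e: "fst p = fst p'" shows "p = p'"
  using p
proof (cases rule: PP_cases)
  case 1
  show ?thesis using p'
  proof (cases rule: PP_cases)
    case 1 thus ?thesis using \<open>p \<in> PX\<close> injfX e by (auto dest: inj_onD)
  next
    case (2 q) thus ?thesis using \<open>p \<in> PX\<close> PXbox[of p] PYbox[OF 2] sx_box[OF 2(1)] e by auto
  next
    case (3 q b) thus ?thesis using \<open>p \<in> PX\<close> uu_facts[OF 3(1,2)] ra_PX[OF 3(1) \<open>p \<in> PX\<close>] e eta_pos by auto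
  qed
next
  case (2 q)
  show ?thesis using p'
  proof (cases rule: PP_cases)
    case 1 thus ?thesis using 2 PXbox[of p'] PYbox[OF 2] sx_box[OF 2(1)] e by auto
  next
    case (2 q')
    show ?thesis
    proof (cases "q = q'")
      case True thus ?thesis using \<open>p \<in> PYf q\<close> 2 injfY[OF 2(1)] e by (auto dest: inj_onD)
    next
      case False thus ?thesis using sx_disj[OF \<open>q \<in> RX\<close> 2(1) False] PYbox[OF \<open>q \<in> RX\<close> \<open>p \<in> PYf q\<close>] PYbox[OF 2] e by auto
    qed
  next
    case (3 q' b) thus ?thesis using 2 uu_facts[OF 3(1,2)] ra_xm[OF 3(1)] PYbox[OF 2] sx_box[OF 2(1)] e eta_pos by auto
  qed
next
  case (3 q b)
  show ?thesis using p'
  proof (cases rule: PP_cases)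
    case 1 thus ?thesis using 3 uu_facts[OF 3(1,2)] ra_PX[OF 3(1) 1] e eta_pos by auto
  next
    case (2 q') thus ?thesis using 3 uu_facts[OF 3(1,2)] ra_xm[OF 3(1)] PYbox[OF 2] sx_box[OF 2(1)] e eta_pos by auto
  next
    case (3 q' b')
    show ?thesis
    proof (cases "q = q'")
      case True thus ?thesis using uu_fst_eq[of q b b'] \<open>q \<in> RX\<close> \<open>b \<in> BYf q\<close> 3 \<open>p = uu q b\<close> e by auto
    next
      case False
      hence "ra q \<noteq> ra q'" using DX[OF \<open>q \<in> RX\<close> 3(1)] by auto
      hence "ra q < ra q' \<or> ra q' < ra q" by auto
      thus ?thesis using ra_ra[OF \<open>q \<in> RX\<close> 3(1)] ra_ra[OF 3(1) \<open>q \<in> RX\<close>] uu_facts[OF 3(1,2)]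
          uu_facts[OF \<open>q \<in> RX\<close> \<open>b \<in> BYf q\<close>] \<open>p = uu q b\<close> 3 e by auto
    qed
  qed
qed

lemma new_y: "p \<in> PP \<Longrightarrow> p \<notin> PX \<Longrightarrow> \<exists>q\<in>RX. lo q < snd p \<and> snd p < hi q"
  by (erule PP_cases) (auto dest: PYbox uu_facts)

lemma I_uniq: assumes "q \<in> RX" "q' \<in> RX" "lo q < y" "y < hi q" "lo q' < y" "y < hi q'" shows "q = q'"
proof (rule ccontr)
  assume "q \<noteq> q'"
  from I_disj[OF assms(1,2) this] show False using assms(3-6) by linarith
qed

lemma PX_new_snd: assumes "z \<in> PX" "w \<in> PP" "w \<notin> PX" shows "snd z \<noteq> snd w"
proof -
  obtain q where q: "q \<in> RX" "lo q < snd w" "snd w < hi q" using new_y[OF assms(2,3)] by blast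
  from PX_out[OF assms(1) q(1)] q(2,3) show ?thesis by linarith
qed

lemma snd_inj: assumes p: "p \<in> PP" and p': "p' \<in> PP" and e: "snd p = snd p'" shows "p = p'"
proof (cases "p \<in> PX")
  case True
  show ?thesis
  proof (cases "p' \<in> PX")
    case True thus ?thesis using \<open>p \<in> PX\<close> injsX e by (auto dest: inj_onD)
  next
    case False thus ?thesis using PX_new_snd[OF \<open>p \<in> PX\<close> p' False] e by simp
  qed
next
  case pn: False
  show ?thesis
  proof (cases "p' \<in> PX")
    case True thus ?thesis using PX_new_snd[OF True p pn] e by simp
  next
    case pn': False
    show ?thesis using p
    proof (cases rule: PP_cases)
      case 1 thus ?thesis using pn by simp
    next
      case (2 q1)
      note A = 2
      have ya: "lo q1 < snd p" "snd p < hi q1" using PYbox[OF A] by auto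
      show ?thesis using p'
      proof (cases rule: PP_cases)
        case 1 thus ?thesis using pn' by simp
      next
        case (2 q2)
        have "lo q2 < snd p'" "snd p' < hi q2" using PYbox[OF 2] by auto
        hence "q1 = q2" using I_uniq[OF A(1) 2(1) ya] e by simp
        thus ?thesis using injsY[OF A(1)] A(2) 2(2) e by (auto dest: inj_onD)
      next
        case (3 q2 b)
        have u: "snd p' = bt b + eps q2" "lo q2 < snd p'" "snd p' < hi q2" using uu_facts[OF 3(1,2)] 3(3) by auto
        hence "q1 = q2" using I_uniq[OF A(1) 3(1) ya] e by simp
        hence "snd p \<le> bt b \<or> bt b + 2 * eps q2 \<le> snd p" using uu_vs_PY[OF 3(1,2)] A(2) by simp
        thus ?thesis using u e eps_pos[OF 3(1)] by auto
      qed
    next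
      case (3 q1 b)
      note A = 3
      have ua: "snd p = bt b + eps q1" "lo q1 < snd p" "snd p < hi q1" using uu_facts[OF A(1,2)] A(3) by auto
      show ?thesis using p'
      proof (cases rule: PP_cases)
        case 1 thus ?thesis using pn' by simp
      next
        case (2 q2)
        have "lo q2 < snd p'" "snd p' < hi q2" using PYbox[OF 2] by auto
        hence "q1 = q2" using I_uniq[OF A(1) 2(1) ua(2,3)] e by simp
        hence "snd p' \<le> bt b \<or> bt b + 2 * eps q1 \<le> snd p'" using uu_vs_PY[OF A(1,2)] 2(2) by simp
        thus ?thesis using ua e eps_pos[OF A(1)] by auto
      next
        case (3 q2 b')
        have u: "snd p' = bt b' + eps q2" "lo q2 < snd p'" "snd p' < hi q2" using uu_facts[OF 3(1,2)] 3(3) by auto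
        hence "q1 = q2" using I_uniq[OF A(1) 3(1) ua(2,3)] e by simp
        hence "bt b = bt b'" using ua u e by simp
        hence "b = b'" using bt_inj[OF A(1) A(2)] 3(2) \<open>q1 = q2\<close> by simp
        thus ?thesis using A(3) 3(3) \<open>q1 = q2\<close> by simp
      qed
    qed
  qed
qed

lemma PP_box: "p \<in> PP \<Longrightarrow> x0 < fst p \<and> fst p < x1 \<and> y0 < snd p \<and> snd p < y1"
proof (erule PP_cases)
  assume "p \<in> PX" thus ?thesis using PXbox[of p] xm by auto
next
  fix q assume "q \<in> RX" "p \<in> PYf q"
  thus ?thesis using PYbox[of q p] sx_box[of q] xm lohi[of q] eta_pos unfolding sx_def
    using RXbox[of q] by auto
next
  fix q b assume a: "q \<in> RX" "b \<in> BYf q" "p = uu q b"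
  thus ?thesis using uu_facts[OF a(1,2)] ra_xm[OF a(1)] RXbox[OF a(1)] lohi[OF a(1)] xm eta_pos by auto
qed

lemma RR_box: "r \<in> RR \<Longrightarrow> x0 < ra r \<and> ra r < rr r \<and> rr r < x1 \<and> y0 < rl r \<and> rl r < rm r \<and> rm r < y1"
proof (erule RR_cases)
  fix q b assume a: "q \<in> RX" "b \<in> BYf q" "r = nu q b"
  have "snd (uu q b) \<in> CP" using CP_snd uu_PP[OF a(1,2)] .
  hence "snd (uu q b) + dP \<le> y1" using gapP[OF _ CP_y1] uu_facts[OF a(1,2)] lohi[OF a(1)] by force
  thus ?thesis using a nu_facts[OF a(1,2)] uu_facts[OF a(1,2)] RXbox[OF a(1)] lohi[OF a(1)] ra_rr[OF a(1)] xm dP_pos eta_pos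
    by auto
next
  fix q assume a: "q \<in> RX" "r \<in> RYf q"
  thus ?thesis using RYbox[OF a] sx_box[OF a(1)] lohi[OF a(1)] xm RXbox[OF a(1)] unfolding sx_def by auto
qed

lemma BB_box: "b \<in> BB \<Longrightarrow> y0 < bs b \<and> bs b \<le> bt b \<and> bt b < y1"
proof (erule BB_cases)
  assume "b \<in> BX" thus ?thesis using BXbox by auto
next
  fix q g assume a: "q \<in> RX" "g \<in> BYf q" "b = nb q g"
  thus ?thesis using BYbox[OF a(1,2)] bt_eps[OF a(1,2)] eps_pos[OF a(1)] lohi[OF a(1)] by auto
qed

lemma R1_RR: assumes r: "r \<in> RR" and p: "p \<in> PP" and c: "ra r < fst p" "fst p \<le> rr r"
  shows "snd p < rl r \<or> rm r < snd p"
  using r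
proof (cases rule: RR_cases)
  case (1 q b)
  have "snd (uu q b) \<in> CP" using CP_snd uu_PP[OF 1(1,2)] .
  moreover have "snd p \<in> CP" using CP_snd[OF p] .
  ultimately have "snd p \<le> snd (uu q b) \<or> snd (uu q b) + dP \<le> snd p" using gapP by force
  thus ?thesis using nu_facts[OF 1(1,2)] 1(3) dP_pos by auto
next
  case (2 q)
  have "p \<in> PYf q" using slot[OF 2(1) p] RYbox[OF 2] c by auto
  thus ?thesis using R1Y[OF 2(1) 2(2)] c by auto
qed


lemma uu_CP: "q \<in> RX \<Longrightarrow> b \<in> BYf q \<Longrightarrow> snd (uu q b) \<in> CP"
  using CP_snd uu_PP by blast

lemma uu_lt: assumes "q \<in> RX" "b \<in> BYf q" "b' \<in> BYf q" "bt b < bt b'"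
  shows "snd (uu q b) < snd (uu q b')"
  using uu_facts(3)[OF assms(1,2)] uu_facts(3)[OF assms(1,3)] assms(4) by simp

lemma N_RR: assumes r: "r \<in> RR" and r': "r' \<in> RR" and c: "ra r < ra r'" "ra r' < rr r"
  shows "rm r \<le> rl r'"
  using r
proof (cases rule: RR_cases)
  case (1 q b)
  note A = 1
  show ?thesis using r'
  proof (cases rule: RR_cases)
    case (1 q' b')
    have "snd (uu q b) < snd (uu q' b')"
    proof (cases "q = q'")
      case True
      have "phi q (bt b) < phi q (bt b')" using c A 1 True unfolding nu_def using eta_pos by simp
      hence "bt b < bt b'" using phi_mono[OF A(1)] by simp
      thus ?thesis using uu_lt[OF A(1,2)] 1(2) True by simp
    next
      case False
      hence "ra q \<noteq> ra q'" using DX[OF A(1) 1(1)] by simp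
      moreover have "\<not> ra q' < ra q"
      proof
        assume "ra q' < ra q"
        hence "ra q' + 2*eta \<le> ra q" using ra_ra[OF 1(1) A(1)] by simp
        thus False using nu_facts(1,2)[OF A(1,2)] nu_facts(1,2)[OF 1(1,2)] uu_facts(2)[OF 1(1,2)] c A(3) 1(3) eta_pos by auto
      qed
      ultimately have "ra q < ra q'" by simp
      moreover have "ra q' < rr q" using nu_facts(1,2,5)[OF 1(1,2)] nu_facts(5)[OF A(1,2)] c A(3) 1(3) by auto
      ultimately have "rm q \<le> rl q'" using NX[OF A(1) 1(1)] by simp
      thus ?thesis using uu_facts[OF A(1,2)] uu_facts[OF 1(1,2)] lohi[OF A(1)] lohi[OF 1(1)] by auto
    qed
    hence "snd (uu q b) + dP \<le> snd (uu q' b')" using gapP uu_CP[OF A(1,2)] uu_CP[OF 1(1,2)] by blast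
    thus ?thesis using nu_facts[OF A(1,2)] nu_facts[OF 1(1,2)] A(3) 1(3) dP_pos by auto
  next
    case (2 q')
    thus ?thesis using RYbox[OF 2] sx_box[OF 2(1)] nu_facts(5)[OF A(1,2)] RXbox[OF A(1)] c A(3) by auto
  qed
next
  case (2 q)
  note A = 2
  show ?thesis using r'
  proof (cases rule: RR_cases)
    case (1 q' b')
    thus ?thesis using RYbox[OF A] sx_box[OF A(1)] nu_facts(2)[OF 1(1,2)] uu_facts(2)[OF 1(1,2)] ra_xm[OF 1(1)] c eta_pos by auto
  next
    case (2 q')
    show ?thesis
    proof (cases "q = q'")
      case True thus ?thesis using NY[OF A(1) A(2)] 2 c by simp
    next
      case False
      thus ?thesis using sx_disj[OF A(1) 2(1) False] RYbox[OF A] RYbox[OF 2] c by auto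
    qed
  qed
qed

lemma D_nu_RY: assumes "q \<in> RX" "b \<in> BYf q" "q' \<in> RX" "r \<in> RYf q'"
  shows "ra (nu q b) \<noteq> ra r \<and> (rm (nu q b) \<le> rl r \<or> rm r \<le> rl (nu q b))"
proof -
  have ra: "ra (nu q b) \<noteq> ra r" using nu_facts(2)[OF assms(1,2)] uu_facts(2)[OF assms(1,2)] ra_xm[OF assms(1)]
      RYbox[OF assms(3,4)] sx_box[OF assms(3)] eta_pos by auto
  let ?y = "snd (uu q b)"
  have "rm (nu q b) \<le> rl r \<or> rm r \<le> rl (nu q b)"
  proof (cases "?y < rl r")
    case True
    hence "?y + dP \<le> rl r" using gapP uu_CP[OF assms(1,2)] CP_rl[OF assms(3,4)] by blast
    thus ?thesis using nu_facts[OF assms(1,2)] dP_pos by auto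
  next
    case F1: False
    show ?thesis
    proof (cases "rm r \<le> ?y")
      case True thus ?thesis using nu_facts[OF assms(1,2)] dP_pos by auto
    next
      case False
      have False
      proof (cases "q = q'")
        case True
        from B1Y[OF assms(3,4)] assms(2) True
        have "rm r \<le> bs b \<or> bt b < rl r" by simp
        thus False
        proof
          assume "rm r \<le> bs b" thus False using BYbox[OF assms(1,2)] uu_facts[OF assms(1,2)] False eps_pos[OF assms(1)] by auto
        next
          assume "bt b < rl r" hence "bt b + 2*eps q \<le> rl r" using bt_rl[OF assms(1,2)] assms(4) True by simp
          thus False using uu_facts[OF assms(1,2)] F1 eps_pos[OF assms(1)] by auto
        qed
      next
        case nq: False
        have "lo q' < ?y" "?y < hi q'" using RYbox[OF assms(3,4)] F1 False by auto
        thus False using I_uniq[OF assms(1,3)] uu_facts[OF assms(1,2)] nq by auto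
      qed
      thus ?thesis ..
    qed
  qed
  with ra show ?thesis by simp
qed

lemma D_RR: assumes r: "r \<in> RR" and r': "r' \<in> RR" and ne: "r \<noteq> r'"
  shows "ra r \<noteq> ra r' \<and> (rm r \<le> rl r' \<or> rm r' \<le> rl r)"
  using r
proof (cases rule: RR_cases)
  case (1 q b)
  note A = 1
  show ?thesis using r'
  proof (cases rule: RR_cases)
    case (1 q' b')
    have key: "ra r \<noteq> ra r' \<and> snd (uu q b) \<noteq> snd (uu q' b')"
    proof (cases "q = q'")
      case True
      hence "b \<noteq> b'" using ne A(3) 1(3) by auto
      hence "bt b \<noteq> bt b'" using bt_inj[OF A(1,2)] 1(2) True by auto
      hence "phi q (bt b) \<noteq> phi q (bt b')" using phi_mono[OF A(1), of "bt b" "bt b'"] phi_mono[OF A(1), of "bt b'" "bt b"] by auto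
      hence "ra r \<noteq> ra r'" using A(3) 1(3) True eta_pos unfolding nu_def by simp
      moreover have "snd (uu q b) \<noteq> snd (uu q' b')" using uu_facts(3)[OF A(1,2)] uu_facts(3)[OF 1(1,2)] True \<open>bt b \<noteq> bt b'\<close> by simp
      ultimately show ?thesis by simp
    next
      case False
      hence "ra q \<noteq> ra q'" using DX[OF A(1) 1(1)] by simp
      hence "ra q < ra q' \<or> ra q' < ra q" by auto
      hence "ra r \<noteq> ra r'" using ra_ra[OF A(1) 1(1)] ra_ra[OF 1(1) A(1)] nu_facts(1,2)[OF A(1,2)] nu_facts(1,2)[OF 1(1,2)]
          uu_facts(2)[OF A(1,2)] uu_facts(2)[OF 1(1,2)] A(3) 1(3) eta_pos by auto
      moreover have "snd (uu q b) \<noteq> snd (uu q' b')" using I_uniq[OF A(1) 1(1)] uu_facts[OF A(1,2)] uu_facts[OF 1(1,2)] False by auto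
      ultimately show ?thesis by simp
    qed
    hence "snd (uu q b) < snd (uu q' b') \<or> snd (uu q' b') < snd (uu q b)" by auto
    hence "snd (uu q b) + dP \<le> snd (uu q' b') \<or> snd (uu q' b') + dP \<le> snd (uu q b)"
      using gapP uu_CP[OF A(1,2)] uu_CP[OF 1(1,2)] by blast
    thus ?thesis using key nu_facts[OF A(1,2)] nu_facts[OF 1(1,2)] A(3) 1(3) dP_pos by auto
  next
    case (2 q')
    thus ?thesis using D_nu_RY[OF A(1,2) 2] A(3) by auto
  qed
next
  case (2 q)
  note A = 2
  show ?thesis using r'
  proof (cases rule: RR_cases)
    case (1 q' b')
    thus ?thesis using D_nu_RY[OF 1(1,2) A] A 1(3) by auto
  next
    case (2 q')
    show ?thesis
    proof (cases "q = q'")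
      case True thus ?thesis using DY[OF A(1) A(2)] 2 ne by simp
    next
      case False
      have "ra r \<noteq> ra r'" using sx_disj[OF A(1) 2(1) False] RYbox[OF A] RYbox[OF 2] by auto
      moreover have "rm r \<le> rl r' \<or> rm r' \<le> rl r" using I_disj[OF A(1) 2(1) False] RYbox[OF A] RYbox[OF 2] by auto
      ultimately show ?thesis by simp
    qed
  qed
qed

lemma BN_BB: assumes b: "b \<in> BB" and b': "b' \<in> BB" and ne: "b \<noteq> b'"
  shows "bt b' < bs b \<or> bt b < bt b'"
  using b
proof (cases rule: BB_cases)
  case 1
  note A = 1
  show ?thesis using b'
  proof (cases rule: BB_cases)
    case 1 thus ?thesis using BNX[OF A 1 ne] by simp
  next
    case (2 q g)
    from B1X[OF 2(1) A] show ?thesis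
      using BYbox[OF 2(1,2)] bt_eps[OF 2(1,2)] eps_pos[OF 2(1)] lohi[OF 2(1)] 2(3) BXbox[OF A] by auto
  qed
next
  case (2 q g)
  note A = 2
  show ?thesis using b'
  proof (cases rule: BB_cases)
    case 1
    from B1X[OF A(1) 1] show ?thesis
      using BYbox[OF A(1,2)] bt_eps[OF A(1,2)] eps_pos[OF A(1)] lohi[OF A(1)] A(3) BXbox[OF 1] by auto
  next
    case (2 q' g')
    show ?thesis
    proof (cases "q = q'")
      case True
      hence "g \<noteq> g'" using ne A(3) 2(3) by auto
      from BNY[OF A(1,2) _ this] 2(2) True
      have "bt g' < bs g \<or> bt g < bt g'" by simp
      thus ?thesis
      proof
        assume "bt g' < bs g"
        hence "bt g' + 2 * eps q \<le> bs g" using bt_bs[OF A(1,2)] 2(2) True by simp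
        thus ?thesis using A(3) 2(3) True eps_pos[OF A(1)] by simp
      next
        assume "bt g < bt g'" thus ?thesis using A(3) 2(3) True by simp
      qed
    next
      case False
      from I_disj[OF A(1) 2(1) False] show ?thesis
        using BYbox[OF A(1,2)] bt_eps[OF A(1,2)] BYbox[OF 2(1,2)] bt_eps[OF 2(1,2)] eps_pos[OF A(1)] eps_pos[OF 2(1)] A(3) 2(3) by auto
    qed
  qed
qed

lemma B1_RR: assumes r: "r \<in> RR" and b: "b \<in> BB" shows "rm r \<le> bs b \<or> bt b < rl r"
  using r
proof (cases rule: RR_cases)
  case (1 q g)
  note A = 1
  let ?y = "snd (uu q g)"
  show ?thesis using b
  proof (cases rule: BB_cases)
    case 1
    from B1X[OF A(1) 1] show ?thesis
    proof
      assume "rm q \<le> bs b"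
      hence "?y < bs b" using uu_facts[OF A(1,2)] lohi[OF A(1)] by auto
      hence "?y + dP \<le> bs b" using gapP uu_CP[OF A(1,2)] CP_bs[OF b] by blast
      thus ?thesis using nu_facts[OF A(1,2)] A(3) dP_pos by auto
    next
      assume "bt b < rl q" thus ?thesis using nu_facts[OF A(1,2)] A(3) uu_facts[OF A(1,2)] lohi[OF A(1)] dP_pos by auto
    qed
  next
    case (2 q' g')
    let ?y' = "snd (uu q' g')"
    have bt': "bt b = ?y'" using 2(3) uu_facts(3)[OF 2(1,2)] by simp
    have bs': "bs b = bs g'" using 2(3) by simp
    show ?thesis
    proof (cases "?y < bs g'")
      case True
      hence "?y + dP \<le> bs g'" using gapP uu_CP[OF A(1,2)] CP_bs[OF b] bs' by metis
      thus ?thesis using nu_facts[OF A(1,2)] A(3) dP_pos bs' by auto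
    next
      case F1: False
      show ?thesis
      proof (cases "?y' \<le> ?y")
        case True thus ?thesis using nu_facts[OF A(1,2)] A(3) dP_pos bt' by auto
      next
        case False
        have False
        proof (cases "q = q'")
          case True
          have "bt g < bt g'" using False uu_facts(3)[OF A(1,2)] uu_facts(3)[OF 2(1,2)] True by simp
          hence "g \<noteq> g'" by auto
          from BNY[OF 2(1,2) _ this[symmetric]] A(2) True
          have "bt g < bs g' \<or> bt g' < bt g" by simp
          thus False
          proof
            assume "bt g < bs g'"
            hence "bt g + 2 * eps q \<le> bs g'" using bt_bs[OF A(1)] A(2) 2(2) True by simp
            thus False using F1 uu_facts(3)[OF A(1,2)] eps_pos[OF A(1)] by simp
          qed (use \<open>bt g < bt g'\<close> in simp)
        next
          case nq: False
          have "lo q' < ?y" "?y < hi q'" using BYbox[OF 2(1,2)] uu_facts[OF 2(1,2)] F1 False by auto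
          thus False using I_uniq[OF A(1) 2(1)] uu_facts[OF A(1,2)] nq by auto
        qed
        thus ?thesis ..
      qed
    qed
  qed
next
  case (2 q)
  note A = 2
  show ?thesis using b
  proof (cases rule: BB_cases)
    case 1
    from B1X[OF A(1) 1] show ?thesis using RYbox[OF A] lohi[OF A(1)] by auto
  next
    case (2 q' g)
    show ?thesis
    proof (cases "q = q'")
      case True
      from B1Y[OF A(1,2)] 2(2) True have "rm r \<le> bs g \<or> bt g < rl r" by simp
      thus ?thesis
      proof
        assume "rm r \<le> bs g" thus ?thesis using 2(3) by simp
      next
        assume "bt g < rl r"
        hence "bt g + 2 * eps q \<le> rl r" using bt_rl[OF A(1)] 2(2) True A(2) by simp
        thus ?thesis using 2(3) True eps_pos[OF A(1)] by simp
      qed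
    next
      case False
      from I_disj[OF A(1) 2(1) False] show ?thesis
        using RYbox[OF A] BYbox[OF 2(1,2)] bt_eps[OF 2(1,2)] eps_pos[OF 2(1)] 2(3) by auto
    qed
  qed
qed


lemma blue_X: assumes b: "b \<in> BX" shows "blueset PP b = blueset PX b"
proof
  show "blueset PX b \<subseteq> blueset PP b" unfolding blueset_def using PX_PP by auto
next
  show "blueset PP b \<subseteq> blueset PX b"
  proof
    fix p assume p: "p \<in> blueset PP b"
    hence pP: "p \<in> PP" and y: "bs b \<le> snd p" "snd p \<le> bt b" unfolding blueset_def by auto
    have "p \<in> PX"
    proof (rule ccontr)
      assume "p \<notin> PX"
      then obtain q where q: "q \<in> RX" "lo q < snd p" "snd p < hi q" using new_y[OF pP] by blast
      from B1X[OF q(1) b] show False using q y lohi[OF q(1)] by auto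
    qed
    thus "p \<in> blueset PX b" using y unfolding blueset_def by auto
  qed
qed

lemma red_Y: assumes q: "q \<in> RX" and r: "r \<in> RYf q" and c: "ra r < z" "z \<le> rr r"
  shows "redset PP r z = redset (PYf q) r z"
proof
  show "redset (PYf q) r z \<subseteq> redset PP r z" unfolding redset_def using PY_PP[OF q] by auto
next
  show "redset PP r z \<subseteq> redset (PYf q) r z"
  proof
    fix p assume p: "p \<in> redset PP r z"
    hence "p \<in> PP" "ra r < fst p" "fst p \<le> z" unfolding redset_def by auto
    hence "p \<in> PYf q" using slot[OF q] RYbox[OF q r] c by auto
    thus "p \<in> redset (PYf q) r z" using p unfolding redset_def by auto
  qed
qed

lemma uu_notin_PX: assumes "q \<in> RX" "b \<in> BYf q" shows "uu q b \<notin> PX"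
proof
  assume "uu q b \<in> PX"
  from PX_out[OF this assms(1)] show False using uu_facts(4,5)[OF assms] by linarith
qed

lemma uu_notin_PY: assumes "q \<in> RX" "b \<in> BYf q" shows "uu q b \<notin> PYf q"
proof
  assume "uu q b \<in> PYf q"
  from uu_vs_PY[OF assms this] show False using uu_facts(3)[OF assms] eps_pos[OF assms(1)] by auto
qed

lemma blue_new: assumes q: "q \<in> RX" and b: "b \<in> BYf q"
  shows "blueset PP (nb q b) = insert (uu q b) (blueset (PYf q) b)"
proof
  show "insert (uu q b) (blueset (PYf q) b) \<subseteq> blueset PP (nb q b)"
    using uu_PP[OF q b] uu_facts[OF q b] BYbox[OF q b] PY_PP[OF q] eps_pos[OF q]
    unfolding blueset_def by auto
next
  show "blueset PP (nb q b) \<subseteq> insert (uu q b) (blueset (PYf q) b)"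
  proof
    fix p assume p: "p \<in> blueset PP (nb q b)"
    hence pP: "p \<in> PP" and y: "bs b \<le> snd p" "snd p \<le> bt b + eps q" unfolding blueset_def by auto
    have yI: "lo q < snd p" "snd p < hi q" using y BYbox[OF q b] bt_eps[OF q b] eps_pos[OF q] by auto
    show "p \<in> insert (uu q b) (blueset (PYf q) b)" using pP
    proof (cases rule: PP_cases)
      case 1 thus ?thesis using PX_out[OF 1 q] yI by auto
    next
      case (2 q')
      have "q' = q" using I_uniq[OF 2(1) q] PYbox[OF 2] yI by auto
      hence "snd p \<le> bt b \<or> bt b + 2 * eps q \<le> snd p" using uu_vs_PY[OF q b] 2 by simp
      thus ?thesis using y eps_pos[OF q] 2 \<open>q' = q\<close> unfolding blueset_def by auto
    next
      case (3 q' b')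
      have "q' = q" using I_uniq[OF 3(1) q] uu_facts[OF 3(1,2)] 3(3) yI by auto
      show ?thesis
      proof (cases "b' = b")
        case True thus ?thesis using 3 \<open>q' = q\<close> by simp
      next
        case False
        from BNY[OF q b _ False[symmetric]] 3(2) \<open>q' = q\<close>
        have "bt b' < bs b \<or> bt b < bt b'" by simp
        thus ?thesis
        proof
          assume "bt b' < bs b"
          hence "bt b' + 2 * eps q \<le> bs b" using bt_bs[OF q b] 3(2) \<open>q' = q\<close> by simp
          thus ?thesis using y 3(3) uu_facts(3)[OF 3(1,2)] \<open>q' = q\<close> eps_pos[OF q] by simp
        next
          assume "bt b < bt b'"
          thus ?thesis using y 3(3) uu_facts(3)[OF 3(1,2)] \<open>q' = q\<close> by simp
        qed
      qed
    qed
  qed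
qed

lemma red_new: assumes q: "q \<in> RX" and b: "b \<in> BYf q" and c: "ra q < z" "z \<le> rr q"
  shows "redset PP (nu q b) (max z (fst (uu q b))) = insert (uu q b) (redset PX q z)"
proof
  let ?u = "uu q b"
  show "insert ?u (redset PX q z) \<subseteq> redset PP (nu q b) (max z (fst ?u))"
  proof
    fix p assume "p \<in> insert ?u (redset PX q z)"
    thus "p \<in> redset PP (nu q b) (max z (fst ?u))"
    proof
      assume "p = ?u"
      thus ?thesis using uu_PP[OF q b] nu_facts[OF q b] dP_pos unfolding redset_def by auto
    next
      assume "p \<in> redset PX q z"
      hence p: "p \<in> PX" "ra q < fst p" "fst p \<le> z" "snd p < rl q" unfolding redset_def by auto
      have "ra q + 2*eta \<le> fst p" using ra_PX[OF q p(1,2)] .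
      thus ?thesis using p PX_PP nu_facts[OF q b] uu_facts[OF q b] lohi[OF q] dP_pos eta_pos
        unfolding redset_def by auto
    qed
  qed
next
  let ?u = "uu q b"
  show "redset PP (nu q b) (max z (fst ?u)) \<subseteq> insert ?u (redset PX q z)"
  proof
    fix p assume p: "p \<in> redset PP (nu q b) (max z (fst ?u))"
    hence pP: "p \<in> PP" and x: "ra (nu q b) < fst p" "fst p \<le> max z (fst ?u)" and y: "snd p < rl (nu q b)"
      unfolding redset_def by auto
    have "\<not> snd ?u + dP \<le> snd p" using y nu_facts(3)[OF q b] dP_pos by auto
    hence yu: "snd p \<le> snd ?u" using gapP[OF uu_CP[OF q b] CP_snd[OF pP]] by force
    have ux: "fst ?u < ra q + eta" "ra q + eta < rr q" using uu_facts[OF q b] ra_rr[OF q] eta_pos by auto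
    show "p \<in> insert ?u (redset PX q z)" using pP
    proof (cases rule: PP_cases)
      case 1
      have "ra q + 2*eta \<le> fst p" using ra_PX[OF q 1] x nu_facts(1)[OF q b] by auto
      hence xz: "fst p \<le> z" using x ux eta_pos by auto
      from R1X[OF q 1] have "snd p < rl q \<or> rm q < snd p" using x xz c nu_facts(1)[OF q b] by auto
      moreover have "\<not> rm q < snd p" using yu uu_facts[OF q b] lohi[OF q] by auto
      ultimately show ?thesis using 1 xz x nu_facts(1)[OF q b] unfolding redset_def by auto
    next
      case (2 q')
      thus ?thesis using PYbox[OF 2] sx_box[OF 2(1)] x ux c RXbox[OF q] by auto
    next
      case (3 q' b')
      show ?thesis
      proof (cases "q' = q")
        case True
        show ?thesis
        proof (cases "b' = b")
          case True thus ?thesis using 3 \<open>q' = q\<close> by simp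
        next
          case False
          have "phi q (bt b) < phi q (bt b' + eps q)"
            using x(1) 3(3) True unfolding nu_def uu_def using eta_pos by simp
          hence "bt b < bt b' + eps q" using phi_mono[OF q] by simp
          moreover from bt_vs[OF q b] 3(2) True False
          have "bt b + 2 * eps q \<le> bt b' \<or> bt b' + 2 * eps q \<le> bt b" by simp
          ultimately have "bt b + 2 * eps q \<le> bt b'" using eps_pos[OF q] by auto
          thus ?thesis using yu 3(3) True uu_facts(3)[OF q b] uu_facts(3)[OF q 3(2)[unfolded True]] eps_pos[OF q] by auto
        qed
      next
        case False
        hence "ra q' \<noteq> ra q" using DX[OF 3(1) q] by simp
        moreover have "\<not> ra q' < ra q"
        proof
          assume "ra q' < ra q"
          hence "ra q' + 2*eta \<le> ra q" using ra_ra[OF 3(1) q] by simp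
          thus False using uu_facts(2)[OF 3(1,2)] 3(3) x(1) nu_facts(1)[OF q b] eta_pos by auto
        qed
        ultimately have "ra q < ra q'" by simp
        moreover have "ra q' < rr q" using uu_facts(1)[OF 3(1,2)] 3(3) x ux c by auto
        ultimately have "rm q \<le> rl q'" using NX[OF q 3(1)] by simp
        thus ?thesis using yu uu_facts[OF q b] uu_facts[OF 3(1,2)] 3(3) lohi[OF q] lohi[OF 3(1)] by auto
      qed
    qed
  qed
qed

lemma game_PP: "game (Suc k) (Suc l) PP RR BB"
  unfolding game_def
proof (intro allI)
  fix col :: "real \<times> real \<Rightarrow> bool"
  have "(\<exists>q\<in>RX. \<exists>z. ra q < z \<and> z \<le> rr q \<and> card (redset PX q z) = k \<and> (\<forall>p\<in>redset PX q z. col p)) \<or>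
        (\<exists>b\<in>BX. card (blueset PX b) = Suc l \<and> (\<forall>p\<in>blueset PX b. \<not> col p))"
    using gameX unfolding game_def by blast
  thus "(\<exists>q\<in>RR. \<exists>z. ra q < z \<and> z \<le> rr q \<and> card (redset PP q z) = Suc k \<and> (\<forall>p\<in>redset PP q z. col p)) \<or>
        (\<exists>b\<in>BB. card (blueset PP b) = Suc l \<and> (\<forall>p\<in>blueset PP b. \<not> col p))"
  proof
    assume "\<exists>q\<in>RX. \<exists>z. ra q < z \<and> z \<le> rr q \<and> card (redset PX q z) = k \<and> (\<forall>p\<in>redset PX q z. col p)"
    then obtain q z where q: "q \<in> RX" and z: "ra q < z" "z \<le> rr q" and cq: "card (redset PX q z) = k"
      and colq: "\<forall>p\<in>redset PX q z. col p" by blast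
    have "(\<exists>r\<in>RYf q. \<exists>z. ra r < z \<and> z \<le> rr r \<and> card (redset (PYf q) r z) = Suc k \<and> (\<forall>p\<in>redset (PYf q) r z. col p)) \<or>
        (\<exists>b\<in>BYf q. card (blueset (PYf q) b) = l \<and> (\<forall>p\<in>blueset (PYf q) b. \<not> col p))"
      using gameY[OF q] unfolding game_def by blast
    thus ?thesis
    proof
      assume "\<exists>r\<in>RYf q. \<exists>z. ra r < z \<and> z \<le> rr r \<and> card (redset (PYf q) r z) = Suc k \<and> (\<forall>p\<in>redset (PYf q) r z. col p)"
      then obtain r z' where r: "r \<in> RYf q" "ra r < z'" "z' \<le> rr r" "card (redset (PYf q) r z') = Suc k"
        "\<forall>p\<in>redset (PYf q) r z'. col p" by blast
      have "r \<in> RR" using RY_RR[OF q r(1)] .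
      thus ?thesis using red_Y[OF q r(1-3)] r by metis
    next
      assume "\<exists>b\<in>BYf q. card (blueset (PYf q) b) = l \<and> (\<forall>p\<in>blueset (PYf q) b. \<not> col p)"
      then obtain b where b: "b \<in> BYf q" "card (blueset (PYf q) b) = l" "\<forall>p\<in>blueset (PYf q) b. \<not> col p" by blast
      show ?thesis
      proof (cases "col (uu q b)")
        case False
        have fin: "finite (blueset (PYf q) b)" using finPY[OF q] unfolding blueset_def by auto
        have ni: "uu q b \<notin> blueset (PYf q) b" using uu_notin_PY[OF q b(1)] unfolding blueset_def by auto
        have "card (blueset PP (nb q b)) = Suc l" using blue_new[OF q b(1)] card_insert_disjoint[OF fin ni] b(2) by simp
        moreover have "\<forall>p\<in>blueset PP (nb q b). \<not> col p" using blue_new[OF q b(1)] b(3) False by auto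
        ultimately show ?thesis using nb_BB[OF q b(1)] by blast
      next
        case True
        let ?z = "max z (fst (uu q b))"
        have fin: "finite (redset PX q z)" using finPX unfolding redset_def by auto
        have ni: "uu q b \<notin> redset PX q z" using uu_notin_PX[OF q b(1)] unfolding redset_def by auto
        have "card (redset PP (nu q b) ?z) = Suc k" using red_new[OF q b(1) z] card_insert_disjoint[OF fin ni] cq by simp
        moreover have "\<forall>p\<in>redset PP (nu q b) ?z. col p" using red_new[OF q b(1) z] colq True by auto
        moreover have "ra (nu q b) < ?z" using nu_facts[OF q b(1)] by auto
        moreover have "?z \<le> rr (nu q b)" using nu_facts(5)[OF q b(1)] uu_facts[OF q b(1)] ra_rr[OF q] z eta_pos by auto
        ultimately show ?thesis using nu_RR[OF q b(1)] by blast
      qed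
    qed
  next
    assume "\<exists>b\<in>BX. card (blueset PX b) = Suc l \<and> (\<forall>p\<in>blueset PX b. \<not> col p)"
    then obtain b where b: "b \<in> BX" "card (blueset PX b) = Suc l" "\<forall>p\<in>blueset PX b. \<not> col p" by blast
    have "b \<in> BB" using b(1) unfolding BB_def by simp
    moreover have "card (blueset PP b) = Suc l \<and> (\<forall>p\<in>blueset PP b. \<not> col p)" using blue_X[OF b(1)] b by simp
    ultimately show ?thesis by blast
  qed
qed

lemma result: "good (Suc k) (Suc l) x0 x1 y0 y1 PP RR BB"
  unfolding good_def
proof (intro conjI)
  show "inj_on fst PP" using fst_inj by (intro inj_onI) blast
  show "inj_on snd PP" using snd_inj by (intro inj_onI) blast
  show "\<forall>q\<in>RR. \<forall>p\<in>PP. ra q < fst p \<and> fst p \<le> rr q \<longrightarrow> snd p < rl q \<or> rm q < snd p"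
    using R1_RR by blast
  show "\<forall>q\<in>RR. \<forall>q'\<in>RR. ra q < ra q' \<and> ra q' < rr q \<longrightarrow> rm q \<le> rl q'"
    using N_RR by blast
  show "\<forall>q\<in>RR. \<forall>q'\<in>RR. q \<noteq> q' \<longrightarrow> ra q \<noteq> ra q' \<and> (rm q \<le> rl q' \<or> rm q' \<le> rl q)"
    using D_RR by blast
  show "\<forall>b\<in>BB. \<forall>b'\<in>BB. b \<noteq> b' \<longrightarrow> bt b' < bs b \<or> bt b < bt b'"
    using BN_BB by blast
  show "\<forall>q\<in>RR. \<forall>b\<in>BB. rm q \<le> bs b \<or> bt b < rl q" using B1_RR by blast
qed (use finPP finRR finBB PP_box RR_box BB_box game_PP in auto)

end


lemma exists_good: "x0 < x1 \<Longrightarrow> y0 < y1 \<Longrightarrow> \<exists>P RP BP. good k l x0 x1 y0 y1 P RP BP"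
proof (induction k arbitrary: l x0 x1 y0 y1)
  case 0
  show ?case using good_red_base[OF 0(1,2)] by blast
next
  case (Suc k)
  note IHk = Suc.IH
  have main: "\<forall>x0 x1 y0 y1. x0 < x1 \<longrightarrow> y0 < y1 \<longrightarrow> (\<exists>P RP BP. good (Suc k) l' x0 x1 y0 y1 P RP BP)" for l'
  proof (induction l')
    case 0 show ?case using good_blue_base by blast
  next
    case (Suc l)
    note IHl = Suc.IH
    show ?case
    proof (intro allI impI)
      fix x0 x1 y0 y1 :: real assume x01: "x0 < x1" and y01: "y0 < y1"
      have xm: "x0 < (x0+x1)/2" using x01 by simp
      obtain PX RX BX where X: "good k (Suc l) x0 ((x0+x1)/2) y0 y1 PX RX BX"
        using IHk[OF xm y01] by blast
      interpret sX: stepX k l x0 x1 y0 y1 PX RX BX using X x01 y01 by unfold_locales auto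
      have "\<forall>q. \<exists>T. q \<in> RX \<longrightarrow> good (Suc k) l (sX.sx q) (sX.sx q + sX.eta) (sX.lo q) (sX.hi q) (fst T) (fst (snd T)) (snd (snd T))"
      proof
        fix q
        show "\<exists>T. q \<in> RX \<longrightarrow> good (Suc k) l (sX.sx q) (sX.sx q + sX.eta) (sX.lo q) (sX.hi q) (fst T) (fst (snd T)) (snd (snd T))"
        proof (cases "q \<in> RX")
          case True
          have a: "sX.sx q < sX.sx q + sX.eta" using sX.eta_pos by simp
          have b: "sX.lo q < sX.hi q" using sX.lohi[OF True] by simp
          obtain P R B where "good (Suc k) l (sX.sx q) (sX.sx q + sX.eta) (sX.lo q) (sX.hi q) P R B"
            using IHl a b by blast
          thus ?thesis by (intro exI[of _ "(P,R,B)"]) simp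
        next
          case False thus ?thesis by simp
        qed
      qed
      then obtain T where T: "\<And>q. q \<in> RX \<Longrightarrow> good (Suc k) l (sX.sx q) (sX.sx q + sX.eta) (sX.lo q) (sX.hi q) (fst (T q)) (fst (snd (T q))) (snd (snd (T q)))"
        by metis
      interpret sY: stepY k l x0 x1 y0 y1 PX RX BX "\<lambda>q. fst (T q)" "\<lambda>q. fst (snd (T q))" "\<lambda>q. snd (snd (T q))"
        by unfold_locales (use T in auto)
      show "\<exists>P RP BP. good (Suc k) (Suc l) x0 x1 y0 y1 P RP BP" using sY.result by blast
    qed
  qed
  thus ?case using Suc.prems by blast
qed

lemma exists_not_in: "finite (S::real set) \<Longrightarrow> \<exists>D>0. D \<notin> S"
proof -
  assume f: "finite S"
  define M where "M = Max (insert 0 S)"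
  have fi: "finite (insert 0 S)" using f by simp
  have M0: "0 \<le> M" unfolding M_def using Max_ge[OF fi, of 0] by simp
  have MS: "\<And>x. x \<in> S \<Longrightarrow> x \<le> M" unfolding M_def using Max_ge[OF fi] by simp
  have "M + 1 \<notin> S" using MS by force
  moreover have "0 < M + 1" using M0 by simp
  ultimately show ?thesis by blast
qed

theorem mainTheorem1:
  shows "m_R_infinite (R_BL \<union> R_HS) 2"
  unfolding m_R_infinite_def
proof (intro allI notI)
  fix m
  assume H: "\<forall>V. finite V \<and> general_position V \<longrightarrow> (\<exists>c. polychromatic V (hyperedges_m V (R_BL \<union> R_HS) m) 2 c)"
  obtain P RP BP where G: "good m m 0 1 0 1 P RP BP" using exists_good[of 0 1 0 1 m m] by auto
  have finP: "finite P" and injf: "inj_on fst P" and injs: "inj_on snd P"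
    and R1: "\<And>q p. q \<in> RP \<Longrightarrow> p \<in> P \<Longrightarrow> ra q < fst p \<Longrightarrow> fst p \<le> rr q \<Longrightarrow> snd p < rl q \<or> rm q < snd p"
    and RPb: "\<And>q. q \<in> RP \<Longrightarrow> rl q < rm q"
    and gm: "game m m P RP BP"
    using G unfolding good_def by auto
  define bad where "bad = (\<lambda>(p,q). (snd q - snd p) / (fst p - fst q)) ` (P \<times> P)"
  have "finite bad" unfolding bad_def using finP by simp
  then obtain D where D: "0 < D" "D \<notin> bad" using exists_not_in by blast
  define f where "f p = (D * fst p, snd p)" for p :: "real \<times> real"
  define V where "V = f ` P"
  have injF: "inj_on f P"
  proof (rule inj_onI)
    fix p q assume "p \<in> P" "q \<in> P" "f p = f q"
    hence "fst p = fst q" "snd p = snd q" using D(1) unfolding f_def by auto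
    thus "p = q" by (simp add: prod_eq_iff)
  qed
  have gp: "general_position V"
    unfolding general_position_def
  proof (intro ballI impI)
    fix v w assume v: "v \<in> V" and w: "w \<in> V" and ne: "v \<noteq> w"
    obtain p where p: "p \<in> P" "v = f p" using v unfolding V_def by auto
    obtain q where q: "q \<in> P" "w = f q" using w unfolding V_def by auto
    have pq: "p \<noteq> q" using ne p q by auto
    have fx: "fst p \<noteq> fst q" using injf p(1) q(1) pq by (auto dest: inj_onD)
    have fy: "snd p \<noteq> snd q" using injs p(1) q(1) pq by (auto dest: inj_onD)
    have "D * fst p + snd p \<noteq> D * fst q + snd q"
    proof
      assume "D * fst p + snd p = D * fst q + snd q"
      hence "D * (fst p - fst q) = snd q - snd p" by (simp add: algebra_simps)
      hence "D = (snd q - snd p) / (fst p - fst q)" using fx by (simp add: field_simps)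
      moreover have "(snd q - snd p) / (fst p - fst q) \<in> bad" unfolding bad_def using p(1) q(1) by force
      ultimately show False using D(2) by simp
    qed
    thus "fst v \<noteq> fst w \<and> snd v \<noteq> snd w \<and> fst v + snd v \<noteq> fst w + snd w"
      using fx fy D(1) p(2) q(2) unfolding f_def by auto
  qed
  have "finite V" unfolding V_def using finP by simp
  then obtain c where pc: "polychromatic V (hyperedges_m V (R_BL \<union> R_HS) m) 2 c" using H gp by blast
  hence pc2: "\<And>e i. e \<in> hyperedges_m V (R_BL \<union> R_HS) m \<Longrightarrow> i \<in> {1..2} \<Longrightarrow> \<exists>v\<in>e. c v = i"
    unfolding polychromatic_def by blast
  define col where "col p = (c (f p) = 1)" for p
  from gm[unfolded game_def, rule_format, of col]
  show False
  proof
    assume "\<exists>q\<in>RP. \<exists>r. ra q < r \<and> r \<le> rr q \<and> card (redset P q r) = m \<and> (\<forall>p\<in>redset P q r. col p)"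
    then obtain q z where q: "q \<in> RP" and z: "ra q < z" "z \<le> rr q" and cd: "card (redset P q z) = m"
      and cl: "\<forall>p\<in>redset P q z. col p" by blast
    define g where "g = mingap (insert (ra q) (fst ` P))"
    have gpos: "0 < g" unfolding g_def using mingap_pos finP by simp
    have gap: "\<And>p. p \<in> P \<Longrightarrow> ra q < fst p \<Longrightarrow> ra q + g \<le> fst p"
      unfolding g_def using mingap_le[of "insert (ra q) (fst ` P)"] finP by force
    define bb where "bb = (rl q + rm q) / 2"
    define Rg where "Rg = {(x, y). D * (ra q + g/2) \<le> x \<and> x \<le> D * z \<and> y \<le> bb}"
    have "Rg \<in> R_BL" unfolding R_BL_def Rg_def
      by (rule CollectI, rule exI[of _ "D * (ra q + g/2)"], rule exI[of _ "D * z"], rule exI[of _ bb]) simp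
    hence RgBL: "Rg \<in> R_BL \<union> R_HS" by simp
    have eq: "V \<inter> Rg = f ` redset P q z"
    proof
      show "V \<inter> Rg \<subseteq> f ` redset P q z"
      proof
        fix v assume "v \<in> V \<inter> Rg"
        then obtain p where p: "p \<in> P" "v = f p" and in1: "D * (ra q + g/2) \<le> D * fst p" "D * fst p \<le> D * z" "snd p \<le> bb"
          unfolding V_def Rg_def f_def by auto
        have x1: "ra q + g/2 \<le> fst p" "fst p \<le> z" using in1 D(1) by auto
        hence x2: "ra q < fst p" using gpos by linarith
        have "snd p < rl q" using R1[OF q p(1) x2] x1 z in1(3) RPb[OF q] unfolding bb_def by auto
        thus "v \<in> f ` redset P q z" using p x1 x2 unfolding redset_def by auto
      qed
    next
      show "f ` redset P q z \<subseteq> V \<inter> Rg"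
      proof
        fix v assume "v \<in> f ` redset P q z"
        then obtain p where p: "p \<in> P" "v = f p" "ra q < fst p" "fst p \<le> z" "snd p < rl q"
          unfolding redset_def by auto
        have "ra q + g \<le> fst p" using gap p by simp
        hence "D * (ra q + g/2) \<le> D * fst p" using D(1) gpos by (intro mult_left_mono) auto
        moreover have "D * fst p \<le> D * z" using D(1) p(4) by (intro mult_left_mono) auto
        moreover have "snd p \<le> bb" using p(5) RPb[OF q] unfolding bb_def by auto
        ultimately show "v \<in> V \<inter> Rg" using p unfolding V_def Rg_def f_def by auto
      qed
    qed
    have "inj_on f (redset P q z)" using inj_on_subset[OF injF] unfolding redset_def by auto
    hence "card (f ` redset P q z) = m" using cd card_image by metis
    hence "f ` redset P q z \<in> hyperedges_m V (R_BL \<union> R_HS) m"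
      unfolding hyperedges_m_def hyperedges_def using eq RgBL by auto
    hence "\<exists>v\<in>f ` redset P q z. c v = 2" using pc2[of "f ` redset P q z" 2] by simp
    then obtain p where "p \<in> redset P q z" "c (f p) = 2" by blast
    thus False using cl unfolding col_def by fastforce
  next
    assume "\<exists>b\<in>BP. card (blueset P b) = m \<and> (\<forall>p\<in>blueset P b. \<not> col p)"
    then obtain b where b: "b \<in> BP" "card (blueset P b) = m" "\<forall>p\<in>blueset P b. \<not> col p" by blast
    define Rg :: "(real \<times> real) set" where "Rg = {(x, y). bs b \<le> y \<and> y \<le> bt b}"
    have "Rg \<in> R_HS" unfolding R_HS_def Rg_def
      by (rule CollectI, rule exI[of _ "bs b"], rule exI[of _ "bt b"]) simp
    hence RgHS: "Rg \<in> R_BL \<union> R_HS" by simp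
    have eq: "V \<inter> Rg = f ` blueset P b"
    proof
      show "V \<inter> Rg \<subseteq> f ` blueset P b"
      proof
        fix v assume "v \<in> V \<inter> Rg"
        then obtain p where p: "p \<in> P" "v = f p" "bs b \<le> snd (f p)" "snd (f p) \<le> bt b"
          unfolding V_def Rg_def by (auto simp: case_prod_beta)
        thus "v \<in> f ` blueset P b" unfolding blueset_def f_def by auto
      qed
    next
      show "f ` blueset P b \<subseteq> V \<inter> Rg"
      proof
        fix v assume "v \<in> f ` blueset P b"
        then obtain p where p: "p \<in> P" "v = f p" "bs b \<le> snd p" "snd p \<le> bt b"
          unfolding blueset_def by auto
        thus "v \<in> V \<inter> Rg" unfolding V_def Rg_def f_def by auto
      qed
    qed
    have "inj_on f (blueset P b)" using inj_on_subset[OF injF] unfolding blueset_def by auto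
    hence "card (f ` blueset P b) = m" using b(2) card_image by metis
    hence "f ` blueset P b \<in> hyperedges_m V (R_BL \<union> R_HS) m"
      unfolding hyperedges_m_def hyperedges_def using eq RgHS by auto
    hence "\<exists>v\<in>f ` blueset P b. c v = 1" using pc2[of "f ` blueset P b" 1] by simp
    then obtain p where "p \<in> blueset P b" "c (f p) = 1" by blast
    thus False using b(3) unfolding col_def by fastforce
  qed
qed

end
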